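(* Let $0<a$ and let $\mathbf v_c=(v_{c1},v_{c2},v_{c3},v_{c4})$ satisfy $a\le v_{c1}\le v_{c2}\le v_{c3}\le v_{c4}<\infty$. Let $\mathbf p_c=(p_{c1},p_{c2},p_{c3},p_{c4})$ be the unique maximizer of $L_{\mathbf v_c}$ over the simplex $\Delta$. For $\mathbf v_t\in[a,\infty)^4$ put $$R(\mathbf v_t,\mathbf v_c)=1-\left(\frac{L_{\mathbf v_t}(\mathbf p_c)}{\max_{\mathbf p\in\Delta}L_{\mathbf v_t}(\mathbf p)}\right)^{1/3},$$ and $R_{\max}(c)=\sup_{\mathbf v_t\in[a,\infty)^4}R(\mathbf v_t,\mathbf v_c)$. (i) If $v_{c4}\ge v_{c1}+v_{c2}+v_{c3}$, then $R_{\max}(c)=1$. (ii) If $v_{c4}<v_{c1}+v_{c2}+v_{c3}$, then $R_{\max}(c)=1-3\,(p_{c2}p_{c3}p_{c4})^{1/3}$.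
   Context: Setting: a $2^2$ experiment with binary response under a generalized linear model with main-effects linear predictor $\eta=\beta_0+\beta_1x_1+\beta_2x_2$. A design is a vector $\mathbf p=(p_1,p_2,p_3,p_4)$ in the simplex $\Delta=\{p_i\ge0,\ \sum_i p_i=1\}$. With $w_i>0$ the GLM weights at the four design points and $v_i=1/w_i$, the $D$-criterion equals $16w_1w_2w_3w_4L_{\mathbf v}(\mathbf p)$ where $$L_{\mathbf v}(\mathbf p)=v_4p_1p_2p_3+v_3p_1p_2p_4+v_2p_1p_3p_4+v_1p_2p_3p_4 .$$ For every $\mathbf v$ with positive entries, $L_{\mathbf v}$ has a unique maximizer on $\Delta$. $\mathbf v_c$ is the assumed value, $\mathbf v_t$ the true value, and $R$ the relative loss of efficiency. *)

theory Defs
  imports Complex_Main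
begin

text \<open>Vectors in R^4 are represented as functions nat => real, indexed by 1..4.
  A design is normalised to vanish outside the index set {1..4}, so that the
  maximiser of L_v over the simplex is unique as a function.\<close>

definition simplex4 :: "(nat \<Rightarrow> real) set" where
  "simplex4 = {p. (\<forall>i\<in>{1..4}. 0 \<le> p i) \<and> (\<forall>i. i \<notin> {1..4} \<longrightarrow> p i = 0)
                  \<and> p 1 + p 2 + p 3 + p 4 = 1}"

definition Lv :: "(nat \<Rightarrow> real) \<Rightarrow> (nat \<Rightarrow> real) \<Rightarrow> real" where
  "Lv v p = v 4 * p 1 * p 2 * p 3 + v 3 * p 1 * p 2 * p 4
          + v 2 * p 1 * p 3 * p 4 + v 1 * p 2 * p 3 * p 4"

definition argmaxL :: "(nat \<Rightarrow> real) \<Rightarrow> (nat \<Rightarrow> real)" where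
  "argmaxL v = (THE p. p \<in> simplex4 \<and> (\<forall>q\<in>simplex4. Lv v q \<le> Lv v p))"

definition maxL :: "(nat \<Rightarrow> real) \<Rightarrow> real" where
  "maxL v = Sup (Lv v ` simplex4)"

definition Rloss :: "(nat \<Rightarrow> real) \<Rightarrow> (nat \<Rightarrow> real) \<Rightarrow> real" where
  "Rloss vt vc = 1 - (Lv vt (argmaxL vc) / maxL vt) powr (1/3)"

definition Rmax :: "real \<Rightarrow> (nat \<Rightarrow> real) \<Rightarrow> real" where
  "Rmax a vc = Sup ((\<lambda>vt. Rloss vt vc) ` {vt. \<forall>i\<in>{1..4}. a \<le> vt i})"

end

theory Submission
  imports Defs "HOL-Analysis.Analysis"
begin

definition Qf :: "real\<Rightarrow>real\<Rightarrow>real\<Rightarrow>real\<Rightarrow>real\<Rightarrow>real\<Rightarrow>real\<Rightarrow>real\<Rightarrow>real" where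
 "Qf u1 u2 u3 u4 y1 y2 y3 y4 = (u1*y1+u2*y2+u3*y3+u4*y4)^2 +
    (u1+u2+u3+u4)*((u2+u3+u4-u1)*y1^2+(u1+u3+u4-u2)*y2^2+(u1+u2+u4-u3)*y3^2+(u1+u2+u3-u4)*y4^2)"

lemma pos3:
  fixes a b c x y z :: real
  assumes "a>0" "b>0" "c>0" "x\<noteq>0 \<or> y\<noteq>0 \<or> z\<noteq>0"
  shows "a*x^2+b*y^2+c*z^2 > 0"
proof -
  have "a*x^2 \<ge> 0" "b*y^2\<ge>0" "c*z^2\<ge>0" using assms by auto
  moreover have "a*x^2 > 0 \<or> b*y^2 > 0 \<or> c*z^2 > 0" using assms by auto
  ultimately show ?thesis by linarith
qed

lemma Qf_id1:
  fixes u1 u2 u3 u4 y1 y2 y3 y4 :: real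
  defines "rr \<equiv> u2+u3+u4" and "ss \<equiv> u2*y2+u3*y3+u4*y4"
  shows "rr^2 * Qf u1 u2 u3 u4 y1 y2 y3 y4 = (rr^2*y1 + u1 * ss)^2 + (u1+rr) * ((u1-rr)*((u2*y3-u3*y2)^2+(u2*y4-u4*y2)^2+(u3*y4-u4*y3)^2
      + 2*(u2*u3+u2*u4+u3*u4)*(y2^2+y3^2+y4^2)) + 2*rr^2*((rr-u2)*y2^2+(rr-u3)*y3^2+(rr-u4)*y4^2))"
  unfolding Qf_def rr_def ss_def by (simp add: algebra_simps power2_eq_square)

lemma Qf_pos1:
  fixes u1 u2 u3 u4 y1 y2 y3 y4 :: real
  assumes "u1>0" "u2>0" "u3>0" "u4>0" "u1 \<ge> u2+u3+u4"
    and "y1\<noteq>0 \<or> y2\<noteq>0 \<or> y3\<noteq>0 \<or> y4\<noteq>0"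
  shows "Qf u1 u2 u3 u4 y1 y2 y3 y4 > 0"
proof -
  define rr where "rr = u2+u3+u4"
  define ss where "ss = u2*y2+u3*y3+u4*y4"
  have rr: "rr > 0" "rr - u2 > 0" "rr-u3>0" "rr-u4>0" "u1 - rr \<ge> 0" using assms by (auto simp: rr_def)
  define W where "W = (u1-rr)*((u2*y3-u3*y2)^2+(u2*y4-u4*y2)^2+(u3*y4-u4*y3)^2
      + 2*(u2*u3+u2*u4+u3*u4)*(y2^2+y3^2+y4^2)) + 2*rr^2*((rr-u2)*y2^2+(rr-u3)*y3^2+(rr-u4)*y4^2)"
  have id: "rr^2 * Qf u1 u2 u3 u4 y1 y2 y3 y4 = (rr^2*y1 + u1 * ss)^2 + (u1+rr) * W"
    unfolding W_def rr_def ss_def by (rule Qf_id1)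
  have W0: "W \<ge> 0" unfolding W_def using rr assms(2-4)
    by (intro add_nonneg_nonneg mult_nonneg_nonneg) auto
  show ?thesis
  proof (cases "y2 = 0 \<and> y3 = 0 \<and> y4 = 0")
    case True
    then have "y1 \<noteq> 0" using assms by auto
    have "rr^2 * Qf u1 u2 u3 u4 y1 y2 y3 y4 = (rr^2*y1)^2 + (u1+rr)*W" using id True by (simp add: ss_def)
    moreover have "(rr^2*y1)^2 > 0" using \<open>y1\<noteq>0\<close> rr by simp
    moreover have "(u1+rr)*W \<ge> 0" using W0 rr assms by simp
    ultimately have "rr^2 * Qf u1 u2 u3 u4 y1 y2 y3 y4 > 0" by linarith
    then show ?thesis using rr by (simp add: zero_less_mult_iff)
  next
    case False
    have "2*rr^2*((rr-u2)*y2^2+(rr-u3)*y3^2+(rr-u4)*y4^2) > 0"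
    proof -
      have "(rr-u2)*y2^2+(rr-u3)*y3^2+(rr-u4)*y4^2 > 0" using False rr
        by (intro pos3) auto
      then show ?thesis using rr by simp
    qed
    moreover have "(u1-rr)*((u2*y3-u3*y2)^2+(u2*y4-u4*y2)^2+(u3*y4-u4*y3)^2
      + 2*(u2*u3+u2*u4+u3*u4)*(y2^2+y3^2+y4^2)) \<ge> 0" using rr assms(2-4)
      by (intro mult_nonneg_nonneg add_nonneg_nonneg) auto
    ultimately have "W > 0" unfolding W_def by linarith
    then have "rr^2 * Qf u1 u2 u3 u4 y1 y2 y3 y4 > 0" using id rr assms
      by (smt (verit) mult_pos_pos zero_le_power2)
    then show ?thesis using rr by (simp add: zero_less_mult_iff)
  qed
qed

lemma pos4:
  fixes a b c e x y z w :: real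
  assumes "a>0" "b>0" "c>0" "e>0" "x\<noteq>0 \<or> y\<noteq>0 \<or> z\<noteq>0 \<or> w\<noteq>0"
  shows "a*x^2+b*y^2+c*z^2+e*w^2 > 0"
proof -
  have "a*x^2 \<ge> 0" "b*y^2\<ge>0" "c*z^2\<ge>0" "e*w^2\<ge>0" using assms by auto
  moreover have "a*x^2 > 0 \<or> b*y^2 > 0 \<or> c*z^2 > 0 \<or> e*w^2>0" using assms by auto
  ultimately show ?thesis by linarith
qed

lemma Qf_pos0:
  fixes u1 u2 u3 u4 y1 y2 y3 y4 :: real
  assumes "u1>0" "u2>0" "u3>0" "u4>0" "u1 < u2+u3+u4" "u2 < u1+u3+u4" "u3 < u1+u2+u4" "u4 < u1+u2+u3"
    and "y1\<noteq>0 \<or> y2\<noteq>0 \<or> y3\<noteq>0 \<or> y4\<noteq>0"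
  shows "Qf u1 u2 u3 u4 y1 y2 y3 y4 > 0"
proof -
  have "(u2+u3+u4-u1)*y1^2+(u1+u3+u4-u2)*y2^2+(u1+u2+u4-u3)*y3^2+(u1+u2+u3-u4)*y4^2 > 0"
    using assms by (intro pos4) auto
  moreover have "u1+u2+u3+u4 > 0" using assms by auto
  ultimately show ?thesis unfolding Qf_def
    by (smt (verit) mult_pos_pos zero_le_power2)
qed

lemma Qf_sym12: "Qf u1 u2 u3 u4 y1 y2 y3 y4 = Qf u2 u1 u3 u4 y2 y1 y3 y4"
  unfolding Qf_def by (simp add: algebra_simps)
lemma Qf_sym13: "Qf u1 u2 u3 u4 y1 y2 y3 y4 = Qf u3 u2 u1 u4 y3 y2 y1 y4"
  unfolding Qf_def by (simp add: algebra_simps)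
lemma Qf_sym14: "Qf u1 u2 u3 u4 y1 y2 y3 y4 = Qf u4 u2 u3 u1 y4 y2 y3 y1"
  unfolding Qf_def by (simp add: algebra_simps)

lemma Qf_pos:
  fixes u1 u2 u3 u4 y1 y2 y3 y4 :: real
  assumes "u1>0" "u2>0" "u3>0" "u4>0"
    and "y1\<noteq>0 \<or> y2\<noteq>0 \<or> y3\<noteq>0 \<or> y4\<noteq>0"
  shows "Qf u1 u2 u3 u4 y1 y2 y3 y4 > 0"
proof -
  consider "u1 \<ge> u2+u3+u4" | "u2 \<ge> u1+u3+u4" | "u3 \<ge> u1+u2+u4" | "u4 \<ge> u1+u2+u3"
    | "u1 < u2+u3+u4" "u2 < u1+u3+u4" "u3 < u1+u2+u4" "u4 < u1+u2+u3" by linarith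
  then show ?thesis
  proof cases
    case 1 then show ?thesis using assms Qf_pos1 by blast
  next
    case 2 then show ?thesis using assms Qf_pos1[of u2 u1 u3 u4 y2 y1 y3 y4] Qf_sym12
      by (auto simp: add_ac)
  next
    case 3 then show ?thesis using assms Qf_pos1[of u3 u2 u1 u4 y3 y2 y1 y4] Qf_sym13
      by (auto simp: add_ac)
  next
    case 4 then show ?thesis using assms Qf_pos1[of u4 u2 u3 u1 y4 y2 y3 y1] Qf_sym14
      by (auto simp: add_ac)
  next
    case 5 then show ?thesis using assms Qf_pos0 by blast
  qed
qed

definition alpha :: "(nat \<Rightarrow> real) \<Rightarrow> (nat \<Rightarrow> real) \<Rightarrow> (nat \<Rightarrow> real) \<Rightarrow> real" where
 "alpha v p d = v 4*(d 1*p 2*p 3 + p 1*d 2*p 3 + p 1*p 2*d 3) + v 3*(d 1*p 2*p 4 + p 1*d 2*p 4 + p 1*p 2*d 4)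
   + v 2*(d 1*p 3*p 4 + p 1*d 3*p 4 + p 1*p 3*d 4) + v 1*(d 2*p 3*p 4 + p 2*d 3*p 4 + p 2*p 3*d 4)"

definition beta :: "(nat \<Rightarrow> real) \<Rightarrow> (nat \<Rightarrow> real) \<Rightarrow> (nat \<Rightarrow> real) \<Rightarrow> real" where
 "beta v p d = v 4*(p 1*d 2*d 3 + d 1*p 2*d 3 + d 1*d 2*p 3) + v 3*(p 1*d 2*d 4 + d 1*p 2*d 4 + d 1*d 2*p 4)
   + v 2*(p 1*d 3*d 4 + d 1*p 3*d 4 + d 1*d 3*p 4) + v 1*(p 2*d 3*d 4 + d 2*p 3*d 4 + d 2*d 3*p 4)"

lemma Lv_expand:
  "Lv v (\<lambda>i. p i + t * d i) = Lv v p + alpha v p d * t + beta v p d * t^2 + Lv v d * t^3"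
  unfolding Lv_def alpha_def beta_def by (simp add: algebra_simps power2_eq_square power3_eq_cube)

lemma logconc_id:
  assumes "p 1 > 0" "p 2 > 0" "p 3 > 0" "p 4 > 0"
  shows "(alpha v p d)^2 - 2 * Lv v p * beta v p d =
     Qf (v 1*p 2*p 3*p 4) (v 2*p 1*p 3*p 4) (v 3*p 1*p 2*p 4) (v 4*p 1*p 2*p 3)
        (d 1/p 1) (d 2/p 2) (d 3/p 3) (d 4/p 4)"
  using assms unfolding Lv_def alpha_def beta_def Qf_def
  by (simp add: field_simps power2_eq_square)

lemma logconc:
  assumes "p 1 > 0" "p 2 > 0" "p 3 > 0" "p 4 > 0" "v 1 > 0" "v 2 > 0" "v 3 > 0" "v 4 > 0"
    and "d 1 \<noteq> 0 \<or> d 2 \<noteq> 0 \<or> d 3 \<noteq> 0 \<or> d 4 \<noteq> 0"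
  shows "2 * Lv v p * beta v p d < (alpha v p d)^2"
proof -
  have "Qf (v 1*p 2*p 3*p 4) (v 2*p 1*p 3*p 4) (v 3*p 1*p 2*p 4) (v 4*p 1*p 2*p 3)
        (d 1/p 1) (d 2/p 2) (d 3/p 3) (d 4/p 4) > 0"
    using assms by (intro Qf_pos) auto
  then show ?thesis using logconc_id[OF assms(1-4), of v d] by linarith
qed

lemma deriv_cond:
  fixes A al be ga de :: real
  assumes "de > 0" "\<And>t. 0 < t \<Longrightarrow> t \<le> de \<Longrightarrow> A + al*t + be*t^2 + ga*t^3 \<le> A"
  shows "al \<le> 0"
proof (rule ccontr)
  assume "\<not> al \<le> 0"
  then have al: "al > 0" by simp
  define K where "K = \<bar>be\<bar> + \<bar>ga\<bar> + 1"
  have K: "K > 0" unfolding K_def by simp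
  define t where "t = min de (min 1 (al/(2*K)))"
  have t: "t > 0" "t \<le> de" "t \<le> 1" "t \<le> al/(2*K)" using assms(1) al K by (auto simp: t_def)
  have "t*K \<le> al/2" using t(4) K by (simp add: field_simps)
  have t3: "t^3 \<le> t^2" using t by (simp add: power_decreasing)
  have "be*t^2 \<ge> -\<bar>be\<bar>*t^2" by (smt (verit) abs_ge_minus_self mult_right_mono zero_le_power2)
  moreover have "ga*t^3 \<ge> -\<bar>ga\<bar>*t^2"
  proof -
    have "ga*t^3 \<ge> -\<bar>ga\<bar>*t^3" using t(1) by (smt (verit) abs_ge_minus_self mult_right_mono zero_le_power)
    moreover have "\<bar>ga\<bar>*t^3 \<le> \<bar>ga\<bar>*t^2" using t3 by (simp add: mult_left_mono)
    ultimately show ?thesis by linarith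
  qed
  ultimately have "be*t^2 + ga*t^3 \<ge> -(K - 1)*t^2" unfolding K_def by (simp add: algebra_simps)
  moreover have "(K-1)*t^2 < K*t^2" using t by simp
  moreover have "K*t^2 = t*(t*K)" by (simp add: power2_eq_square)
  moreover have "t*(t*K) \<le> t*(al/2)" using \<open>t*K \<le> al/2\<close> t by (simp add: mult_left_mono)
  ultimately have "be*t^2 + ga*t^3 > -(t*(al/2))" by linarith
  moreover have "al*t > t*(al/2)" using al t by simp
  ultimately have "A + al*t + be*t^2 + ga*t^3 > A" by (simp add: algebra_simps)
  with assms(2)[OF t(1,2)] show False by linarith
qed

lemma amgm_id:
  fixes x y z :: real
  shows "(x+y+z)^3 - 27*x*y*z = ((x+y+z)/2)*((x-y)^2+(y-z)^2+(z-x)^2) + 3*(x*(y-z)^2 + y*(x-z)^2 + z*(x-y)^2)"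
  by (simp add: field_simps power2_eq_square power3_eq_cube; algebra)

lemma amgm3:
  fixes x y z :: real
  assumes "x \<ge> 0" "y \<ge> 0" "z \<ge> 0"
  shows "27*x*y*z \<le> (x+y+z)^3"
proof -
  have "((x+y+z)/2)*((x-y)^2+(y-z)^2+(z-x)^2) + 3*(x*(y-z)^2 + y*(x-z)^2 + z*(x-y)^2) \<ge> 0"
    using assms by (intro add_nonneg_nonneg mult_nonneg_nonneg) auto
  then show ?thesis using amgm_id[of x y z] by linarith
qed

lemma amgm3_le:
  fixes x y z :: real
  assumes "x \<ge> 0" "y \<ge> 0" "z \<ge> 0" "x+y+z \<le> 1"
  shows "x*y*z \<le> 1/27"
proof -
  have "(x+y+z)^3 \<le> 1" using assms by (simp add: power_le_one)
  then show ?thesis using amgm3[OF assms(1-3)] by linarith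
qed

lemma amgm3_eq:
  fixes x y z :: real
  assumes "x \<ge> 0" "y \<ge> 0" "z \<ge> 0" "x+y+z = 1" "x*y*z \<ge> 1/27"
  shows "x = 1/3 \<and> y = 1/3 \<and> z = 1/3"
proof -
  define S where "S = (x-y)^2+(y-z)^2+(z-x)^2"
  define T where "T = x*(y-z)^2 + y*(x-z)^2 + z*(x-y)^2"
  have e: "(x+y+z)^3 - 27*(x*y*z) = ((x+y+z)/2)*S + 3*T"
    using amgm_id[of x y z] unfolding S_def T_def by simp
  then have e2: "1 - 27*(x*y*z) = S/2 + 3*T" using assms(4) by simp
  have "T \<ge> 0" unfolding T_def using assms by (intro add_nonneg_nonneg mult_nonneg_nonneg) auto
  then have "S \<le> 0" using e2 assms(5) by linarith
  then have "(x-y)^2 = 0" "(y-z)^2 = 0" unfolding S_def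
    by (smt (verit) zero_le_power2)+
  then show ?thesis using assms(4) by auto
qed

definition ismax :: "(nat \<Rightarrow> real) \<Rightarrow> (nat \<Rightarrow> real) \<Rightarrow> bool" where
  "ismax v p \<longleftrightarrow> p \<in> simplex4 \<and> (\<forall>q\<in>simplex4. Lv v q \<le> Lv v p)"

lemma simplex4_iff: "p \<in> simplex4 \<longleftrightarrow> p 1 \<ge> 0 \<and> p 2 \<ge> 0 \<and> p 3 \<ge> 0 \<and> p 4 \<ge> 0 \<and>
   (\<forall>i. i \<notin> {1..4} \<longrightarrow> p i = 0) \<and> p 1 + p 2 + p 3 + p 4 = 1"
proof -
  have "{1..4::nat} = {1,2,3,4}" by auto
  then show ?thesis unfolding simplex4_def by auto
qed

lemma simplex4_le1: assumes "p \<in> simplex4" shows "p 1 \<le> 1" "p 2 \<le> 1" "p 3 \<le> 1" "p 4 \<le> 1"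
  using assms unfolding simplex4_iff by linarith+

lemma simplex4_eqI:
  assumes "p \<in> simplex4" "q \<in> simplex4" "p 1 = q 1" "p 2 = q 2" "p 3 = q 3" "p 4 = q 4"
  shows "p = q"
proof
  fix i
  show "p i = q i"
  proof (cases "i \<in> {1..4}")
    case True
    then have "i = 1 \<or> i = 2 \<or> i = 3 \<or> i = 4" by auto
    then show ?thesis using assms by auto
  next
    case False
    then show ?thesis using assms unfolding simplex4_iff by auto
  qed
qed

lemma first_order:
  assumes "ismax v p" "de > 0" "\<And>t. 0 < t \<Longrightarrow> t \<le> de \<Longrightarrow> (\<lambda>i. p i + t * d i) \<in> simplex4"
  shows "alpha v p d \<le> 0"
proof (rule deriv_cond[OF assms(2)])
  fix t :: real assume "0 < t" "t \<le> de"
  then have "Lv v (\<lambda>i. p i + t * d i) \<le> Lv v p" using assms(1,3) unfolding ismax_def by blast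
  then show "Lv v p + alpha v p d * t + beta v p d * t^2 + Lv v d * t^3 \<le> Lv v p"
    by (simp add: Lv_expand)
qed

lemma seg_in:
  assumes "p \<in> simplex4" "q \<in> simplex4" "0 \<le> t" "t \<le> 1"
  shows "(\<lambda>i. p i + t * (q i - p i)) \<in> simplex4"
proof -
  have h: "\<And>a b. 0 \<le> a \<Longrightarrow> 0 \<le> b \<Longrightarrow> 0 \<le> a + t*(b - a)"
  proof -
    fix a b :: real assume "0 \<le> a" "0 \<le> b"
    have "a + t*(b-a) = (1-t)*a + t*b" by (simp add: algebra_simps)
    also have "\<dots> \<ge> 0" using assms \<open>0\<le>a\<close> \<open>0\<le>b\<close> by simp
    finally show "0 \<le> a + t*(b - a)" .
  qed
  have sum: "(p 1 + t * (q 1 - p 1)) + (p 2 + t * (q 2 - p 2)) + (p 3 + t * (q 3 - p 3)) + (p 4 + t * (q 4 - p 4))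
     = (p 1 + p 2 + p 3 + p 4) + t * ((q 1 + q 2 + q 3 + q 4) - (p 1 + p 2 + p 3 + p 4))"
    by (simp add: algebra_simps)
  show ?thesis using assms(1,2) sum unfolding simplex4_iff
    apply (intro conjI)
    apply (rule h; simp)+
    by auto
qed

lemma seg_back:
  assumes "p \<in> simplex4" "q \<in> simplex4" "0 \<le> t" "t \<le> p 1" "t \<le> p 2" "t \<le> p 3" "t \<le> p 4"
  shows "(\<lambda>i. p i + t * (- (q i - p i))) \<in> simplex4"
proof -
  have h: "\<And>a b. t \<le> a \<Longrightarrow> 0 \<le> b \<Longrightarrow> b \<le> 1 \<Longrightarrow> 0 \<le> a + t*(-(b - a))"
  proof -
    fix a b :: real assume "t \<le> a" "0 \<le> b" "b \<le> 1"
    have "t*b \<le> t" using \<open>b \<le> 1\<close> assms(3) by (simp add: mult_left_le)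
    moreover have "t*a \<ge> 0" using assms(3) \<open>t \<le> a\<close> by simp
    ultimately show "0 \<le> a + t*(-(b - a))" using \<open>t \<le> a\<close> by (simp add: algebra_simps)
  qed
  have sum: "(p 1 + t * (- (q 1 - p 1))) + (p 2 + t * (- (q 2 - p 2))) + (p 3 + t * (- (q 3 - p 3))) + (p 4 + t * (- (q 4 - p 4)))
     = (p 1 + p 2 + p 3 + p 4) - t * ((q 1 + q 2 + q 3 + q 4) - (p 1 + p 2 + p 3 + p 4))"
    by (simp add: algebra_simps)
  have le1: "q 1 \<le> 1" "q 2 \<le> 1" "q 3 \<le> 1" "q 4 \<le> 1" using simplex4_le1[OF assms(2)] by auto
  show ?thesis using assms(1,2) assms(4-7) le1 sum unfolding simplex4_iff
    apply (intro conjI)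
    apply (rule h; simp)+
    by auto
qed

lemma alpha_neg: "alpha v p (\<lambda>i. - d i) = - alpha v p d"
  unfolding alpha_def by (simp add: algebra_simps)

lemma alpha_shift: "alpha v (\<lambda>i. p i + d i) (\<lambda>i. - d i) = -(alpha v p d + 2*beta v p d + 3*Lv v d)"
  unfolding alpha_def beta_def Lv_def by (simp add: algebra_simps)

lemma interior_unique:
  assumes v: "v 1 > 0" "v 2 > 0" "v 3 > 0" "v 4 > 0"
    and mp: "ismax v p" and mq: "ismax v q"
    and pp: "p 1 > 0" "p 2 > 0" "p 3 > 0" "p 4 > 0"
    and qp: "q 1 > 0" "q 2 > 0" "q 3 > 0" "q 4 > 0"
  shows "p = q"
proof (rule ccontr)
  assume ne: "p \<noteq> q"
  have ps: "p \<in> simplex4" and qs: "q \<in> simplex4" using mp mq unfolding ismax_def by auto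
  define d where "d = (\<lambda>i. q i - p i)"
  define e where "e = (\<lambda>i. p i - q i)"
  have dne: "d 1 \<noteq> 0 \<or> d 2 \<noteq> 0 \<or> d 3 \<noteq> 0 \<or> d 4 \<noteq> 0"
    using simplex4_eqI[OF ps qs] ne unfolding d_def by auto
  have a1: "alpha v p d \<le> 0"
    by (rule first_order[OF mp, of 1]) (use seg_in[OF ps qs] in \<open>auto simp: d_def\<close>)
  define dp where "dp = min (min (p 1) (p 2)) (min (p 3) (p 4))"
  have dp: "dp > 0" "dp \<le> p 1" "dp \<le> p 2" "dp \<le> p 3" "dp \<le> p 4" using pp by (auto simp: dp_def)
  have a2: "alpha v p (\<lambda>i. - d i) \<le> 0"
    by (rule first_order[OF mp dp(1)]) (use seg_back[OF ps qs] dp in \<open>auto simp: d_def\<close>)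
  have ap: "alpha v p d = 0" using a1 a2 alpha_neg[of v p d] by linarith
  define dq where "dq = min (min (q 1) (q 2)) (min (q 3) (q 4))"
  have dq: "dq > 0" "dq \<le> q 1" "dq \<le> q 2" "dq \<le> q 3" "dq \<le> q 4" using qp by (auto simp: dq_def)
  have b1: "alpha v q e \<le> 0"
    by (rule first_order[OF mq, of 1]) (use seg_in[OF qs ps] in \<open>auto simp: e_def\<close>)
  have b2: "alpha v q (\<lambda>i. - e i) \<le> 0"
    by (rule first_order[OF mq dq(1)]) (use seg_back[OF qs ps] dq in \<open>auto simp: e_def\<close>)
  have aq: "alpha v q e = 0" using b1 b2 alpha_neg[of v q e] by linarith
  have qeq: "q = (\<lambda>i. p i + d i)" by (auto simp: d_def)
  have eeq: "e = (\<lambda>i. - d i)" by (auto simp: d_def e_def)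
  have sh: "alpha v q e = -(alpha v p d + 2*beta v p d + 3*Lv v d)"
    using alpha_shift[of v p d] qeq eeq by simp
  have "Lv v q = Lv v p" using mp mq ps qs unfolding ismax_def by (simp add: order_antisym)
  moreover have "Lv v q = Lv v p + alpha v p d + beta v p d + Lv v d"
    using Lv_expand[of v p 1 d] qeq by simp
  ultimately have "beta v p d + Lv v d = 0" using ap by simp
  moreover have "2*beta v p d + 3*Lv v d = 0" using sh aq ap by simp
  ultimately have "beta v p d = 0" by linarith
  with logconc[OF pp v dne] ap show False by simp
qed

lemma boundary4:
  assumes v: "v 1 > 0" "v 2 > 0" "v 3 > 0" "v 4 > 0"
    and mp: "ismax v p" and p4: "p 4 = 0"
  shows "v 1 + v 2 + v 3 \<le> v 4"
proof -
  have ps: "p \<in> simplex4" using mp unfolding ismax_def by auto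
  define e4 where "e4 = (\<lambda>i::nat. if i = 1 \<or> i = 2 \<or> i = 3 then (1/3::real) else 0)"
  have e4s: "e4 \<in> simplex4" unfolding simplex4_iff e4_def by auto
  have "Lv v e4 \<le> Lv v p" using mp e4s unfolding ismax_def by auto
  moreover have "Lv v e4 = v 4 / 27" unfolding Lv_def e4_def by simp
  moreover have "Lv v p = v 4 * (p 1 * p 2 * p 3)" unfolding Lv_def using p4 by simp
  ultimately have "v 4 * (1/27) \<le> v 4 * (p 1 * p 2 * p 3)" by simp
  then have "p 1 * p 2 * p 3 \<ge> 1/27" using v(4) by (simp add: mult_le_cancel_left_pos)
  moreover have "p 1 \<ge> 0" "p 2 \<ge> 0" "p 3 \<ge> 0" "p 1 + p 2 + p 3 = 1" using ps p4 unfolding simplex4_iff by auto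
  ultimately have p3: "p 1 = 1/3" "p 2 = 1/3" "p 3 = 1/3" using amgm3_eq by blast+
  define dl where "dl = (\<lambda>i::nat. if i = 4 then (1::real) else 0)"
  have dls: "dl \<in> simplex4" unfolding simplex4_iff dl_def by auto
  have "alpha v p (\<lambda>i. dl i - p i) \<le> 0"
    by (rule first_order[OF mp, of 1]) (use seg_in[OF ps dls] in auto)
  moreover have "alpha v p (\<lambda>i. dl i - p i) = (v 1 + v 2 + v 3 - v 4)/9"
    unfolding alpha_def dl_def p3 p4 by simp
  ultimately show ?thesis by simp
qed

definition pw :: "nat \<Rightarrow> (nat \<Rightarrow> real) \<Rightarrow> (nat \<Rightarrow> real)" where
  "pw k f = (\<lambda>i. if i = k then f 4 else if i = 4 then f k else f i)"

lemma pw_pw: "pw k (pw k f) = f"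
  unfolding pw_def by auto

lemma pw_simplex: assumes "k \<in> {1..4}" "p \<in> simplex4" shows "pw k p \<in> simplex4"
proof -
  have "k = 1 \<or> k = 2 \<or> k = 3 \<or> k = 4" using assms(1) by auto
  then show ?thesis using assms(2) unfolding simplex4_iff pw_def by (auto simp: algebra_simps)
qed

lemma pw_Lv: assumes "k \<in> {1..4}" shows "Lv (pw k v) (pw k p) = Lv v p"
proof -
  have "k = 1 \<or> k = 2 \<or> k = 3 \<or> k = 4" using assms(1) by auto
  then show ?thesis unfolding Lv_def pw_def by (auto simp: algebra_simps)
qed

lemma pw_ismax: assumes "k \<in> {1..4}" "ismax v p" shows "ismax (pw k v) (pw k p)"
  unfolding ismax_def
proof (intro conjI ballI)
  show "pw k p \<in> simplex4" using assms pw_simplex unfolding ismax_def by auto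
  fix q assume "q \<in> simplex4"
  then have "pw k q \<in> simplex4" using pw_simplex assms(1) by auto
  then have "Lv v (pw k q) \<le> Lv v p" using assms(2) unfolding ismax_def by auto
  moreover have "Lv (pw k v) q = Lv v (pw k q)" using pw_Lv[OF assms(1), of v "pw k q"] by (simp add: pw_pw)
  ultimately show "Lv (pw k v) q \<le> Lv (pw k v) (pw k p)" using pw_Lv[OF assms(1)] by simp
qed

lemma boundary_any:
  assumes v: "v 1 > 0" "v 2 > 0" "v 3 > 0" "v 4 > 0"
    and mp: "ismax v p" and k: "k \<in> {1..4}" and pk: "p k = 0"
  shows "v 1 + v 2 + v 3 + v 4 \<le> 2 * v k"
proof -
  have kk: "k = 1 \<or> k = 2 \<or> k = 3 \<or> k = 4" using k by auto
  have v': "pw k v 1 > 0" "pw k v 2 > 0" "pw k v 3 > 0" "pw k v 4 > 0"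
    using kk v unfolding pw_def by auto
  have "pw k p 4 = 0" using pk unfolding pw_def by auto
  from boundary4[OF v' pw_ismax[OF k mp] this]
  show ?thesis using kk unfolding pw_def by auto
qed

lemma interior:
  assumes v: "v 1 > 0" "v 2 > 0" "v 3 > 0" "v 4 > 0"
    and mp: "ismax v p" and strict: "\<And>k. k \<in> {1..4} \<Longrightarrow> v 1 + v 2 + v 3 + v 4 > 2 * v k"
  shows "p 1 > 0" "p 2 > 0" "p 3 > 0" "p 4 > 0"
proof -
  have ps: "p \<in> simplex4" using mp unfolding ismax_def by auto
  have "\<And>k. k \<in> {1..4} \<Longrightarrow> p k > 0"
  proof -
    fix k :: nat assume k: "k \<in> {1..4}"
    have "p k \<ge> 0" using ps k unfolding simplex4_def by auto
    moreover have "p k \<noteq> 0" using boundary_any[OF v mp k] strict[OF k] by force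
    ultimately show "p k > 0" by simp
  qed
  then show "p 1 > 0" "p 2 > 0" "p 3 > 0" "p 4 > 0" by auto
qed

definition tofun :: "real \<times> real \<times> real \<times> real \<Rightarrow> nat \<Rightarrow> real" where
  "tofun x = (\<lambda>i. if i = 1 then fst x else if i = 2 then fst (snd x) else if i = 3 then fst (snd (snd x))
      else if i = 4 then snd (snd (snd x)) else 0)"

lemma exists_max: "\<exists>p. ismax v p"
proof -
  define S where "S = {x :: real \<times> real \<times> real \<times> real. 0 \<le> fst x \<and> 0 \<le> fst (snd x) \<and> 0 \<le> fst (snd (snd x))
     \<and> 0 \<le> snd (snd (snd x)) \<and> fst x + fst (snd x) + fst (snd (snd x)) + snd (snd (snd x)) = 1}"
  define g where "g = (\<lambda>x::real \<times> real \<times> real \<times> real. Lv v (tofun x))"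
  have gform: "g = (\<lambda>x. v 4 * fst x * fst (snd x) * fst (snd (snd x)) + v 3 * fst x * fst (snd x) * snd (snd (snd x))
     + v 2 * fst x * fst (snd (snd x)) * snd (snd (snd x)) + v 1 * fst (snd x) * fst (snd (snd x)) * snd (snd (snd x)))"
    unfolding g_def Lv_def tofun_def by simp
  have cl: "closed S" unfolding S_def
    by (intro closed_Collect_conj closed_Collect_le closed_Collect_eq continuous_intros)
  have bd: "bounded S" unfolding bounded_iff
  proof (intro exI ballI)
    fix x assume "x \<in> S"
    obtain a b c d where x: "x = (a,b,c,d)" by (cases x) auto
    have h: "0 \<le> a" "0 \<le> b" "0\<le>c" "0\<le>d" "a+b+c+d = 1" using \<open>x \<in> S\<close> unfolding S_def x by auto
    have "norm x \<le> norm a + (norm b + (norm c + norm d))" unfolding x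
      by (meson add_left_mono norm_Pair_le order_trans)
    also have "\<dots> = 1" using h by simp
    finally show "norm x \<le> 1" .
  qed
  have cpt: "compact S" using cl bd compact_eq_bounded_closed by blast
  have ne: "(1,0,0,0) \<in> S" unfolding S_def by simp
  have cont: "continuous_on S g" unfolding gform by (intro continuous_intros)
  obtain x where xS: "x \<in> S" and xm: "\<And>y. y \<in> S \<Longrightarrow> g y \<le> g x"
    using continuous_attains_sup[OF cpt _ cont] ne by blast
  have "tofun x \<in> simplex4" using xS unfolding S_def simplex4_iff tofun_def by auto
  moreover have "\<forall>q\<in>simplex4. Lv v q \<le> Lv v (tofun x)"
  proof
    fix q assume q: "q \<in> simplex4"
    define y where "y = (q 1, q 2, q 3, q 4)"
    have "y \<in> S" using q unfolding S_def y_def simplex4_iff by auto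
    moreover have "tofun y = q" using q unfolding tofun_def y_def simplex4_iff by auto
    ultimately show "Lv v q \<le> Lv v (tofun x)" using xm unfolding g_def by metis
  qed
  ultimately show ?thesis unfolding ismax_def by blast
qed

lemma argmax_eq:
  assumes "ismax v p" "\<And>q. ismax v q \<Longrightarrow> q = p"
  shows "argmaxL v = p"
  unfolding argmaxL_def
proof (rule the_equality)
  show "p \<in> simplex4 \<and> (\<forall>q\<in>simplex4. Lv v q \<le> Lv v p)" using assms(1) unfolding ismax_def .
next
  fix q assume "q \<in> simplex4 \<and> (\<forall>qa\<in>simplex4. Lv v qa \<le> Lv v q)"
  then show "q = p" using assms(2) unfolding ismax_def by blast
qed

definition e4 :: "nat \<Rightarrow> real" where
  "e4 = (\<lambda>i::nat. if i = 1 \<or> i = 2 \<or> i = 3 then (1/3::real) else 0)"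

lemma e4_simplex: "e4 \<in> simplex4" unfolding simplex4_iff e4_def by auto

lemma case1_id:
  "v 4/27 - Lv v p = (v 4 - (v 1 + v 2 + v 3))*(1/27 - p 1*p 2*p 3) + v 1*(1/27 - p 2*p 3*(p 1+p 4))
     + v 2*(1/27 - p 1*p 3*(p 2+p 4)) + v 3*(1/27 - p 1*p 2*(p 3+p 4))"
  unfolding Lv_def by (simp add: algebra_simps)

lemma case1_max:
  assumes v: "v 1 > 0" "v 2 > 0" "v 3 > 0" "v 4 > 0" and big: "v 4 \<ge> v 1 + v 2 + v 3"
  shows "ismax v e4" "\<And>q. ismax v q \<Longrightarrow> q = e4"
proof -
  have Le4: "Lv v e4 = v 4/27" unfolding Lv_def e4_def by simp
  have bnd: "\<And>p. p \<in> simplex4 \<Longrightarrow> Lv v p \<le> v 4/27 \<and> (Lv v p = v 4/27 \<longrightarrow> p = e4)"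
  proof -
    fix p assume ps: "p \<in> simplex4"
    have nn: "p 1 \<ge> 0" "p 2 \<ge> 0" "p 3 \<ge> 0" "p 4 \<ge> 0" "p 1 + p 2 + p 3 + p 4 = 1"
      using ps unfolding simplex4_iff by auto
    define T0 where "T0 = (v 4 - (v 1 + v 2 + v 3))*(1/27 - p 1*p 2*p 3)"
    define T1 where "T1 = v 1*(1/27 - p 2*p 3*(p 1+p 4))"
    define T2 where "T2 = v 2*(1/27 - p 1*p 3*(p 2+p 4))"
    define T3 where "T3 = v 3*(1/27 - p 1*p 2*(p 3+p 4))"
    have a0: "p 1*p 2*p 3 \<le> 1/27" using amgm3_le[of "p 1" "p 2" "p 3"] nn by simp
    have a1: "p 2*p 3*(p 1+p 4) \<le> 1/27" using amgm3_le[of "p 2" "p 3" "p 1 + p 4"] nn by simp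
    have a2: "p 1*p 3*(p 2+p 4) \<le> 1/27" using amgm3_le[of "p 1" "p 3" "p 2 + p 4"] nn by simp
    have a3: "p 1*p 2*(p 3+p 4) \<le> 1/27" using amgm3_le[of "p 1" "p 2" "p 3 + p 4"] nn by simp
    have t: "T0 \<ge> 0" "T1 \<ge> 0" "T2 \<ge> 0" "T3 \<ge> 0"
      unfolding T0_def T1_def T2_def T3_def using a0 a1 a2 a3 v big by auto
    have id: "v 4/27 - Lv v p = T0 + T1 + T2 + T3" unfolding T0_def T1_def T2_def T3_def by (rule case1_id)
    show "Lv v p \<le> v 4/27 \<and> (Lv v p = v 4/27 \<longrightarrow> p = e4)"
    proof (intro conjI impI)
      show "Lv v p \<le> v 4/27" using id t by linarith
      assume "Lv v p = v 4/27"
      then have "T1 = 0" "T2 = 0" using id t by linarith+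
      then have "p 2*p 3*(p 1+p 4) = 1/27" "p 1*p 3*(p 2+p 4) = 1/27"
        unfolding T1_def T2_def using v by auto
      then have "p 2 = 1/3 \<and> p 3 = 1/3" "p 1 = 1/3"
        using amgm3_eq[of "p 2" "p 3" "p 1 + p 4"] amgm3_eq[of "p 1" "p 3" "p 2 + p 4"] nn
        by (auto simp: algebra_simps)
      moreover have "p 4 = 0" using calculation nn by linarith
      ultimately show "p = e4" using simplex4_eqI[OF ps e4_simplex] unfolding e4_def by auto
    qed
  qed
  show "ismax v e4" unfolding ismax_def using e4_simplex bnd Le4 by (metis order_refl)
  fix q assume "ismax v q"
  then have "q \<in> simplex4" "Lv v e4 \<le> Lv v q" unfolding ismax_def using e4_simplex by auto
  then show "q = e4" using bnd Le4 by force
qed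

lemma cbrt_cube: assumes "(z::real) \<ge> 0" shows "(z^3) powr (1/3) = z"
proof (cases "z = 0")
  case True then show ?thesis by simp
next
  case False
  then have "z > 0" using assms by simp
  then have "z^3 = z powr 3" by (simp add: powr_realpow)
  then have "(z^3) powr (1/3) = (z powr 3) powr (1/3)" by simp
  also have "\<dots> = z powr (3 * (1/3))" by (simp add: powr_powr)
  also have "\<dots> = z" using \<open>z > 0\<close> by simp
  finally show ?thesis .
qed

lemma cube_cbrt: assumes "(x::real) \<ge> 0" shows "(x powr (1/3))^3 = x"
proof (cases "x = 0")
  case True then show ?thesis by simp
next
  case False
  then have "x > 0" using assms by simp
  then have "(x powr (1/3))^3 = (x powr (1/3)) powr 3" by (simp add: powr_realpow)
  also have "\<dots> = x powr ((1/3) * 3)" by (simp add: powr_powr)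
  also have "\<dots> = x" using \<open>x > 0\<close> by simp
  finally show ?thesis .
qed

lemma cbrt_27: assumes "(m::real) \<ge> 0" shows "(27*m) powr (1/3) = 3 * m powr (1/3)"
proof -
  have "(27::real) powr (1/3) = 3" using cbrt_cube[of 3] by simp
  then show ?thesis using assms by (simp add: powr_mult)
qed

lemma cbrt_subadd: assumes "(x::real) \<ge> 0" "y \<ge> 0"
  shows "(x+y) powr (1/3) \<le> x powr (1/3) + y powr (1/3)"
proof -
  define A where "A = x powr (1/3)"
  define B where "B = y powr (1/3)"
  have AB: "A \<ge> 0" "B \<ge> 0" unfolding A_def B_def by auto
  have "x + y = A^3 + B^3" unfolding A_def B_def using cube_cbrt assms by simp
  also have "\<dots> \<le> (A+B)^3" using AB by (simp add: power3_eq_cube algebra_simps)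
  finally have "(x+y) powr (1/3) \<le> ((A+B)^3) powr (1/3)" using assms by (intro powr_mono2) auto
  also have "\<dots> = A + B" using AB by (intro cbrt_cube) simp
  finally show ?thesis unfolding A_def B_def .
qed

lemma mul27: "(w::real) \<ge> 0 \<Longrightarrow> t \<le> 1/27 \<Longrightarrow> w*t \<le> w/27"
  using mult_left_mono[of t "1/27" w] by simp

lemma Lv_le_sum:
  assumes "q \<in> simplex4" "vt 1 \<ge> 0" "vt 2 \<ge> 0" "vt 3 \<ge> 0" "vt 4 \<ge> 0"
  shows "Lv vt q \<le> (vt 1 + vt 2 + vt 3 + vt 4)/27"
proof -
  have nn: "q 1 \<ge> 0" "q 2 \<ge> 0" "q 3 \<ge> 0" "q 4 \<ge> 0" "q 1 + q 2 + q 3 + q 4 = 1"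
    using assms(1) unfolding simplex4_iff by auto
  have ts: "q 1*q 2*q 3 \<le> 1/27" "q 1*q 2*q 4 \<le> 1/27" "q 1*q 3*q 4 \<le> 1/27" "q 2*q 3*q 4 \<le> 1/27"
    using nn by (intro amgm3_le; linarith)+
  have "vt 4*(q 1*q 2*q 3) \<le> vt 4/27" "vt 3*(q 1*q 2*q 4) \<le> vt 3/27"
     "vt 2*(q 1*q 3*q 4) \<le> vt 2/27" "vt 1*(q 2*q 3*q 4) \<le> vt 1/27"
    by (rule mul27[OF assms(5) ts(1)], rule mul27[OF assms(4) ts(2)], rule mul27[OF assms(3) ts(3)],
        rule mul27[OF assms(2) ts(4)])
  then show ?thesis unfolding Lv_def by (simp add: mult.assoc)
qed

lemma maxL_props:
  assumes "vt 1 > 0" "vt 2 > 0" "vt 3 > 0" "vt 4 > 0"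
  shows "maxL vt \<le> (vt 1 + vt 2 + vt 3 + vt 4)/27" "\<And>q. q \<in> simplex4 \<Longrightarrow> Lv vt q \<le> maxL vt"
proof -
  have ne: "Lv vt ` simplex4 \<noteq> {}" using e4_simplex by auto
  have ub: "\<And>q. q \<in> simplex4 \<Longrightarrow> Lv vt q \<le> (vt 1 + vt 2 + vt 3 + vt 4)/27"
    using Lv_le_sum assms by (simp add: less_imp_le)
  show "maxL vt \<le> (vt 1 + vt 2 + vt 3 + vt 4)/27" unfolding maxL_def
    using ne ub by (intro cSup_least) auto
  have bdd: "bdd_above (Lv vt ` simplex4)"
    by (rule bdd_aboveI2[where M="(vt 1 + vt 2 + vt 3 + vt 4)/27"]) (rule ub)
  fix q assume "q \<in> simplex4"
  then show "Lv vt q \<le> maxL vt" unfolding maxL_def using bdd by (intro cSup_upper) auto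
qed

definition e1 :: "nat \<Rightarrow> real" where
  "e1 = (\<lambda>i::nat. if i = 2 \<or> i = 3 \<or> i = 4 then (1/3::real) else 0)"

lemma e1_simplex: "e1 \<in> simplex4" unfolding simplex4_iff e1_def by auto
lemma Lv_e1: "Lv vt e1 = vt 1 / 27" unfolding Lv_def e1_def by simp

lemma Rmax_formula:
  assumes a: "a > 0" and pc: "argmaxL vc = pc" "pc \<in> simplex4"
    and ord: "pc 2 \<le> pc 1" "pc 3 \<le> pc 1" "pc 4 \<le> pc 1"
  shows "Rmax a vc = 1 - 3 * (pc 2 * pc 3 * pc 4) powr (1/3)"
proof -
  define m where "m = pc 2 * pc 3 * pc 4"
  define c where "c = 1 - 3 * m powr (1/3)"
  define A where "A = {vt::nat\<Rightarrow>real. \<forall>i\<in>{1..4}. a \<le> vt i}"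
  have nn: "pc 1 \<ge> 0" "pc 2 \<ge> 0" "pc 3 \<ge> 0" "pc 4 \<ge> 0" "pc 1 + pc 2 + pc 3 + pc 4 = 1"
    using pc(2) unfolding simplex4_iff by auto
  have m0: "m \<ge> 0" unfolding m_def using nn by simp
  have tr: "pc 1 * pc 2 * pc 3 \<ge> m" "pc 1 * pc 2 * pc 4 \<ge> m" "pc 1 * pc 3 * pc 4 \<ge> m"
  proof -
    have "pc 4 * (pc 2 * pc 3) \<le> pc 1 * (pc 2 * pc 3)" using ord nn by (intro mult_right_mono) auto
    then show "pc 1 * pc 2 * pc 3 \<ge> m" unfolding m_def by (simp add: ac_simps)
    have "pc 3 * (pc 2 * pc 4) \<le> pc 1 * (pc 2 * pc 4)" using ord nn by (intro mult_right_mono) auto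
    then show "pc 1 * pc 2 * pc 4 \<ge> m" unfolding m_def by (simp add: ac_simps)
    have "pc 2 * (pc 3 * pc 4) \<le> pc 1 * (pc 3 * pc 4)" using ord nn by (intro mult_right_mono) auto
    then show "pc 1 * pc 3 * pc 4 \<ge> m" unfolding m_def by (simp add: ac_simps)
  qed
  have upper: "\<And>vt. vt \<in> A \<Longrightarrow> Rloss vt vc \<le> c"
  proof -
    fix vt assume "vt \<in> A"
    then have vge: "vt 1 \<ge> a" "vt 2 \<ge> a" "vt 3 \<ge> a" "vt 4 \<ge> a" unfolding A_def by auto
    then have vp: "vt 1 > 0" "vt 2 > 0" "vt 3 > 0" "vt 4 > 0" using a by linarith+
    define S where "S = vt 1 + vt 2 + vt 3 + vt 4"
    define M where "M = maxL vt"
    have MS: "M \<le> S/27" unfolding M_def S_def by (rule maxL_props(1)[OF vp])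
    have Mpos: "M > 0"
    proof -
      have "Lv vt e1 \<le> M" unfolding M_def by (rule maxL_props(2)[OF vp e1_simplex])
      then show ?thesis using Lv_e1[of vt] vp by simp
    qed
    have "Lv vt pc = vt 4 * (pc 1 * pc 2 * pc 3) + vt 3 * (pc 1 * pc 2 * pc 4) + vt 2 * (pc 1 * pc 3 * pc 4) + vt 1 * m"
      unfolding Lv_def m_def by (simp add: ac_simps)
    moreover have "vt 4 * (pc 1 * pc 2 * pc 3) \<ge> vt 4 * m" "vt 3 * (pc 1 * pc 2 * pc 4) \<ge> vt 3 * m"
      "vt 2 * (pc 1 * pc 3 * pc 4) \<ge> vt 2 * m" using tr vp by (simp_all add: mult_left_mono)
    ultimately have "Lv vt pc \<ge> m * S" unfolding S_def by (simp add: algebra_simps)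
    moreover have "m * S \<ge> 27 * m * M"
    proof -
      have "m * (27 * M) \<le> m * S" using MS m0 by (intro mult_left_mono) auto
      then show ?thesis by (simp add: ac_simps)
    qed
    ultimately have "Lv vt pc \<ge> 27 * m * M" by linarith
    then have rat: "Lv vt pc / M \<ge> 27 * m" using Mpos by (simp add: pos_le_divide_eq)
    have "(27*m) powr (1/3) \<le> (Lv vt pc / M) powr (1/3)" using rat m0 by (intro powr_mono2) auto
    then have "3 * m powr (1/3) \<le> (Lv vt pc / M) powr (1/3)" using cbrt_27[OF m0] by simp
    then show "Rloss vt vc \<le> c" unfolding Rloss_def c_def M_def pc(1) by simp
  qed
  have approx: "\<And>e. e > 0 \<Longrightarrow> \<exists>vt\<in>A. Rloss vt vc > c - e"
  proof -
    fix e :: real assume e: "e > 0"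
    define M0 where "M0 = a + 3*a/e^3 + 1"
    have e3: "e^3 > 0" using e by simp
    have q: "3*a/e^3 > 0" using a e3 by simp
    have M0: "M0 > 3*a/e^3" "M0 \<ge> a" "M0 > 0" unfolding M0_def using a q by linarith+
    define vt where "vt = (\<lambda>i::nat. if i = 1 then M0 else a)"
    have vtA: "vt \<in> A" unfolding A_def vt_def using M0 by auto
    have vp: "vt 1 > 0" "vt 2 > 0" "vt 3 > 0" "vt 4 > 0" unfolding vt_def using a M0 by auto
    define M where "M = maxL vt"
    have Mge: "M \<ge> M0/27"
    proof -
      have "Lv vt e1 \<le> M" unfolding M_def by (rule maxL_props(2)[OF vp e1_simplex])
      then show ?thesis using Lv_e1[of vt] by (simp add: vt_def)
    qed
    have Mpos: "M > 0" using Mge M0 by linarith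
    have L0: "Lv vt pc \<ge> 0" unfolding Lv_def vt_def using nn a M0 by simp
    have t27: "pc 1 * pc 2 * pc 3 \<le> 1/27" "pc 1 * pc 2 * pc 4 \<le> 1/27" "pc 1 * pc 3 * pc 4 \<le> 1/27"
      using nn by (intro amgm3_le; linarith)+
    have "Lv vt pc = a * (pc 1 * pc 2 * pc 3) + a * (pc 1 * pc 2 * pc 4) + a * (pc 1 * pc 3 * pc 4) + M0 * m"
      unfolding Lv_def m_def vt_def by (simp add: ac_simps)
    also have "\<dots> \<le> a/27 + a/27 + a/27 + M0 * m"
    proof -
      have a0: "a \<ge> 0" using a by simp
      have "a * (pc 1 * pc 2 * pc 3) \<le> a/27" "a * (pc 1 * pc 2 * pc 4) \<le> a/27" "a * (pc 1 * pc 3 * pc 4) \<le> a/27"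
        by (rule mul27[OF a0 t27(1)], rule mul27[OF a0 t27(2)], rule mul27[OF a0 t27(3)])
      then show ?thesis by linarith
    qed
    finally have Lb: "Lv vt pc \<le> a/9 + M0 * m" by simp
    have "Lv vt pc / M \<le> Lv vt pc / (M0/27)" using L0 Mge M0 by (intro divide_left_mono) auto
    also have "\<dots> \<le> (a/9 + M0 * m) / (M0/27)" using Lb M0 by (intro divide_right_mono) auto
    also have "\<dots> = 27*m + 3*a/M0" using M0 by (simp add: field_simps)
    finally have rb: "Lv vt pc / M \<le> 27*m + 3*a/M0" .
    have r0: "Lv vt pc / M \<ge> 0" using L0 Mpos by simp
    have small: "3*a/M0 < e^3" using M0 e3 a by (simp add: field_simps)
    have "(Lv vt pc / M) powr (1/3) \<le> (27*m + 3*a/M0) powr (1/3)" using rb r0 by (intro powr_mono2) auto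
    also have "\<dots> \<le> (27*m) powr (1/3) + (3*a/M0) powr (1/3)" using m0 a M0 by (intro cbrt_subadd) auto
    also have "(3*a/M0) powr (1/3) < (e^3) powr (1/3)" using small a M0 by (intro powr_less_mono2) auto
    then have "(27*m) powr (1/3) + (3*a/M0) powr (1/3) < 3 * m powr (1/3) + e"
      using cbrt_27[OF m0] cbrt_cube[of e] e by simp
    finally have "(Lv vt pc / M) powr (1/3) < 3 * m powr (1/3) + e" .
    then have "Rloss vt vc > c - e" unfolding Rloss_def c_def M_def pc(1) by simp
    then show "\<exists>vt\<in>A. Rloss vt vc > c - e" using vtA by blast
  qed
  define Sset where "Sset = (\<lambda>vt. Rloss vt vc) ` A"
  have Sne: "Sset \<noteq> {}" unfolding Sset_def A_def by auto
  have Sbdd: "bdd_above Sset" unfolding Sset_def by (rule bdd_aboveI2[where M=c]) (rule upper)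
  have le: "Sup Sset \<le> c" using Sne upper unfolding Sset_def by (intro cSup_least) auto
  have ge: "c \<le> Sup Sset"
  proof (rule ccontr)
    assume "\<not> c \<le> Sup Sset"
    then have "c - Sup Sset > 0" by simp
    from approx[OF this] obtain vt where "vt \<in> A" "Rloss vt vc > Sup Sset" by auto
    moreover have "Rloss vt vc \<le> Sup Sset" using \<open>vt \<in> A\<close> Sbdd unfolding Sset_def by (intro cSup_upper) auto
    ultimately show False by simp
  qed
  have "Rmax a vc = Sup Sset" unfolding Rmax_def Sset_def A_def by simp
  then show ?thesis using le ge unfolding c_def m_def by simp
qed

definition sw :: "nat \<Rightarrow> (nat \<Rightarrow> real) \<Rightarrow> (nat \<Rightarrow> real)" where
  "sw j p = (\<lambda>i. if i = 1 then p j else if i = j then p 1 else p i)"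

lemma sw_simplex: assumes "j \<in> {2,3,4}" "p \<in> simplex4" shows "sw j p \<in> simplex4"
proof -
  have "j = 2 \<or> j = 3 \<or> j = 4" using assms(1) by auto
  then show ?thesis using assms(2) unfolding simplex4_iff sw_def by (auto simp: algebra_simps)
qed

lemma sw_gain:
  assumes "j \<in> {2,3,4}" "p \<in> simplex4" "p 1 < p j" "v 1 \<le> v j"
  shows "Lv v p \<le> Lv v (sw j p)"
proof -
  have nn: "p 1 \<ge> 0" "p 2 \<ge> 0" "p 3 \<ge> 0" "p 4 \<ge> 0" using assms(2) unfolding simplex4_iff by auto
  have h: "(p 1 - p j) * (v 1 - v j) \<ge> 0" using assms(3,4) by (intro mult_nonpos_nonpos) auto
  have "j = 2 \<or> j = 3 \<or> j = 4" using assms(1) by auto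
  then show ?thesis
  proof (elim disjE)
    assume j: "j = 2"
    have "Lv v (sw j p) - Lv v p = (p 3 * p 4) * ((p 1 - p j) * (v 1 - v j))"
      unfolding Lv_def sw_def j by (simp add: algebra_simps)
    moreover have "(p 3 * p 4) * ((p 1 - p j) * (v 1 - v j)) \<ge> 0" using nn h by simp
    ultimately show ?thesis by linarith
  next
    assume j: "j = 3"
    have "Lv v (sw j p) - Lv v p = (p 2 * p 4) * ((p 1 - p j) * (v 1 - v j))"
      unfolding Lv_def sw_def j by (simp add: algebra_simps)
    moreover have "(p 2 * p 4) * ((p 1 - p j) * (v 1 - v j)) \<ge> 0" using nn h by simp
    ultimately show ?thesis by linarith
  next
    assume j: "j = 4"
    have "Lv v (sw j p) - Lv v p = (p 2 * p 3) * ((p 1 - p j) * (v 1 - v j))"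
      unfolding Lv_def sw_def j by (simp add: algebra_simps)
    moreover have "(p 2 * p 3) * ((p 1 - p j) * (v 1 - v j)) \<ge> 0" using nn h by simp
    ultimately show ?thesis by linarith
  qed
qed

lemma order_max:
  assumes "j \<in> {2,3,4}" "v 1 \<le> v j" "ismax v p" "\<And>q. ismax v q \<Longrightarrow> q = p"
  shows "p j \<le> p 1"
proof (rule ccontr)
  assume "\<not> p j \<le> p 1"
  then have lt: "p 1 < p j" by simp
  have ps: "p \<in> simplex4" using assms(3) unfolding ismax_def by auto
  have "ismax v (sw j p)" unfolding ismax_def
    using sw_simplex[OF assms(1) ps] sw_gain[OF assms(1) ps lt assms(2)] assms(3) unfolding ismax_def
    by (meson order_trans)
  then have "sw j p = p" using assms(4) by blast
  then have "sw j p 1 = p 1" by simp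
  then show False using lt unfolding sw_def by simp
qed

theorem corollary3:
  fixes a :: real and vc :: "nat \<Rightarrow> real"
  assumes "0 < a"
    and "a \<le> vc 1" and "vc 1 \<le> vc 2" and "vc 2 \<le> vc 3" and "vc 3 \<le> vc 4"
  shows "(vc 4 \<ge> vc 1 + vc 2 + vc 3 \<longrightarrow> Rmax a vc = 1)
       \<and> (vc 4 < vc 1 + vc 2 + vc 3 \<longrightarrow>
            Rmax a vc = 1 - 3 * (argmaxL vc 2 * argmaxL vc 3 * argmaxL vc 4) powr (1/3))"
proof -
  have v: "vc 1 > 0" "vc 2 > 0" "vc 3 > 0" "vc 4 > 0" using assms by linarith+
  show ?thesis
  proof (cases "vc 4 \<ge> vc 1 + vc 2 + vc 3")
    case True
    have am: "argmaxL vc = e4" using case1_max[OF v True] by (intro argmax_eq) auto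
    have "Rmax a vc = 1 - 3 * (e4 2 * e4 3 * e4 4) powr (1/3)"
      by (rule Rmax_formula[OF assms(1) am e4_simplex]) (auto simp: e4_def)
    then have "Rmax a vc = 1" by (simp add: e4_def)
    then show ?thesis using True by simp
  next
    case False
    then have small: "vc 4 < vc 1 + vc 2 + vc 3" by simp
    have strict: "\<And>k. k \<in> {1..4} \<Longrightarrow> vc 1 + vc 2 + vc 3 + vc 4 > 2 * vc k"
    proof -
      fix k :: nat assume "k \<in> {1..4}"
      then have "k = 1 \<or> k = 2 \<or> k = 3 \<or> k = 4" by auto
      then show "vc 1 + vc 2 + vc 3 + vc 4 > 2 * vc k" using small v assms by auto
    qed
    obtain p where mp: "ismax vc p" using exists_max by blast
    have uq: "\<And>q. ismax vc q \<Longrightarrow> q = p"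
    proof -
      fix q assume mq: "ismax vc q"
      show "q = p" using interior_unique[OF v mq mp interior[OF v mq strict] interior[OF v mp strict]] .
    qed
    have am: "argmaxL vc = p" by (rule argmax_eq[OF mp uq])
    have ps: "p \<in> simplex4" using mp unfolding ismax_def by auto
    have o: "p 2 \<le> p 1" "p 3 \<le> p 1" "p 4 \<le> p 1"
      using order_max[OF _ _ mp uq, of 2] order_max[OF _ _ mp uq, of 3] order_max[OF _ _ mp uq, of 4] assms
      by auto
    have "Rmax a vc = 1 - 3 * (p 2 * p 3 * p 4) powr (1/3)"
      by (rule Rmax_formula[OF assms(1) am ps o])
    then show ?thesis using small am by simp
  qed
qed

end
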